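(* Let $d>0$, $n\in\mathbb{N}$, and let $\phi_\nu, W_\nu$, $\nu=1,\ldots,n$, be continuous complex-valued functions on $[0,d]$ such that $W_n(0)=1$ and, for every $d_1$ with $0<d_1\le d$, the system $\{\phi_\nu\}_{\nu=1}^n$ is linearly independent on $[0,d_1]$. Then the operator $R$ in $L_2[0,d]$ given by $$(Rg)(x)=\sum_{\nu=1}^n\phi_\nu(x)\int_0^x W_\nu(\xi)g(\xi)\,d\xi$$ is infinite-dimensional, i.e. its range is not a finite-dimensional linear subspace. *)

theory Defs
  imports "HOL-Analysis.Analysis"
begin

definition lin_indep_on :: "real set \<Rightarrow> nat \<Rightarrow> (nat \<Rightarrow> real \<Rightarrow> complex) \<Rightarrow> bool" where
  "lin_indep_on S n f \<longleftrightarrow>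
     (\<forall>c :: nat \<Rightarrow> complex. (\<forall>x\<in>S. (\<Sum>i=1..n. c i * f i x) = 0) \<longrightarrow> (\<forall>i\<in>{1..n}. c i = 0))"

definition L2_on :: "real set \<Rightarrow> (real \<Rightarrow> complex) \<Rightarrow> bool" where
  "L2_on S g \<longleftrightarrow> g \<in> borel_measurable (lebesgue_on S)
      \<and> integrable (lebesgue_on S) (\<lambda>x. (cmod (g x))\<^sup>2)"

definition volterra_op ::
  "nat \<Rightarrow> (nat \<Rightarrow> real \<Rightarrow> complex) \<Rightarrow> (nat \<Rightarrow> real \<Rightarrow> complex) \<Rightarrow> (real \<Rightarrow> complex) \<Rightarrow> real \<Rightarrow> complex" where
  "volterra_op n \<phi> W g x =
     (\<Sum>\<nu>=1..n. \<phi> \<nu> x * integral\<^sup>L (lebesgue_on {0..x}) (\<lambda>\<xi>. W \<nu> \<xi> * g \<xi>))"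

definition finite_dim_range_on ::
  "real set \<Rightarrow> ((real \<Rightarrow> complex) \<Rightarrow> real \<Rightarrow> complex) \<Rightarrow> bool" where
  "finite_dim_range_on S R \<longleftrightarrow>
     (\<exists>(m::nat) (h :: nat \<Rightarrow> real \<Rightarrow> complex). \<forall>g. L2_on S g \<longrightarrow>
        (\<exists>c :: nat \<Rightarrow> complex. \<forall>x\<in>S. R g x = (\<Sum>i<m. c i * h i x)))"

end

theory Submission imports Defs "HOL-Library.Function_Algebras" begin

interpretation FV: vector_space "\<lambda>(c::complex) (f::real\<Rightarrow>complex). (\<lambda>x. c * f x)"
  by unfold_locales (auto simp: fun_eq_iff algebra_simps)

lemma sum_fun_app: "(sum F A) x = (\<Sum>a\<in>A. F a x)"
  by (induction A rule: infinite_finite_induct) auto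

lemma ind_L2:
  assumes "0 \<le> t" "t \<le> s" "s \<le> d"
  shows "L2_on {0..d} (indicator {t..s} :: real \<Rightarrow> complex)"
proof -
  have m: "(indicator {t..s} :: real \<Rightarrow> complex) \<in> borel_measurable lebesgue"
    by (intro borel_measurable_indicator) auto
  have e: "(\<lambda>x. (cmod ((indicator {t..s} :: real \<Rightarrow> complex) x))\<^sup>2) = indicator {t..s}"
    by (auto simp: indicator_def fun_eq_iff)
  have "integrable (lebesgue_on {0..d}) (indicator {t..s} :: real \<Rightarrow> real)"
    using assms by (subst integrable_indicator_iff) (auto simp: emeasure_restrict_space sets_restrict_space_iff)
  then show ?thesis unfolding L2_on_def e using m measurable_restrict_space1 by blast
qed

lemma ind_integral:
  fixes w :: "real \<Rightarrow> complex"
  assumes "0 \<le> t" "t \<le> s" "s \<le> x" "continuous_on {t..s} w"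
  shows "integral\<^sup>L (lebesgue_on {0..x}) (\<lambda>\<xi>. w \<xi> * indicator {t..s} \<xi>) = integral {t..s} w"
proof -
  let ?f = "\<lambda>\<xi>. w \<xi> * indicator {t..s} \<xi>"
  have e1: "?f = (\<lambda>\<xi>. if \<xi> \<in> {t..s} then w \<xi> else 0)"
    by (auto simp: indicator_def fun_eq_iff)
  have e2: "(\<lambda>\<xi>. if \<xi> \<in> {0..x} then ?f \<xi> else 0) = (\<lambda>\<xi>. if \<xi> \<in> {t..s} then w \<xi> else 0)"
    using assms by (auto simp: indicator_def fun_eq_iff)
  have "w absolutely_integrable_on {t..s}"
    using assms(4) absolutely_integrable_continuous_real by blast
  then have "?f absolutely_integrable_on {0..x}"
    using absolutely_integrable_restrict_UNIV[of "{0..x}" ?f] absolutely_integrable_restrict_UNIV[of "{t..s}" w]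
    unfolding e2 by simp
  then have "integrable (lebesgue_on {0..x}) ?f"
    by (simp add: integrable_restrict_space set_integrable_def)
  then have "integral\<^sup>L (lebesgue_on {0..x}) ?f = integral {0..x} ?f"
    by (intro lebesgue_integral_eq_integral) auto
  also have "\<dots> = integral ({t..s} \<inter> {0..x}) w"
    unfolding e1 by (rule integral_restrict_Int)
  also have "{t..s} \<inter> {0..x} = {t..s}" using assms by auto
  finally show ?thesis .
qed

lemma int_approx:
  fixes w :: "real \<Rightarrow> complex"
  assumes "0 \<le> \<epsilon>" "t \<le> s" "continuous_on {t..s} w" "\<forall>\<xi>\<in>{t..s}. norm (w \<xi> - c) \<le> \<epsilon>"
  shows "norm (integral {t..s} w - of_real (s-t) * c) \<le> \<epsilon> * (s-t)"
proof -
  have "(w has_integral integral {t..s} w) {t..s}"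
    using assms(3) integrable_continuous_real by blast
  moreover have "((\<lambda>x. c) has_integral (s - t) *\<^sub>R c) {t..s}"
    using has_integral_const_real[of c t s] assms(2) by simp
  ultimately have "((\<lambda>\<xi>. w \<xi> - c) has_integral (integral {t..s} w - (s - t) *\<^sub>R c)) {t..s}"
    by (rule has_integral_diff)
  then have "norm (integral {t..s} w - (s - t) *\<^sub>R c) \<le> \<epsilon> * Henstock_Kurzweil_Integration.content {t..s}"
    using assms by (intro has_integral_bound_real[where S="{}"]) auto
  then show ?thesis using assms by (simp add: scaleR_conv_of_real)
qed

theorem lemma2:
  fixes d :: real and n :: nat
    and \<phi> W :: "nat \<Rightarrow> real \<Rightarrow> complex"
  assumes "d > 0"
    and "n \<ge> 1"
    and "\<And>\<nu>. \<nu> \<in> {1..n} \<Longrightarrow> continuous_on {0..d} (\<phi> \<nu>)"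
    and "\<And>\<nu>. \<nu> \<in> {1..n} \<Longrightarrow> continuous_on {0..d} (W \<nu>)"
    and "W n 0 = 1"
    and "\<And>d1. 0 < d1 \<Longrightarrow> d1 \<le> d \<Longrightarrow> lin_indep_on {0..d1} n \<phi>"
  shows "\<not> finite_dim_range_on {0..d} (volterra_op n \<phi> W)"
proof
  assume "finite_dim_range_on {0..d} (volterra_op n \<phi> W)"
  then obtain m :: nat and h where hm: "\<forall>g. L2_on {0..d} g \<longrightarrow>
        (\<exists>c. \<forall>x\<in>{0..d}. volterra_op n \<phi> W g x = (\<Sum>i<m. c i * h i x))"
    unfolding finite_dim_range_on_def by auto
  define r where "r f = (\<lambda>x. if x \<in> {0..d} then f x else (0::complex))" for f :: "real \<Rightarrow> complex"
  define Rim where "Rim t = {r (volterra_op n \<phi> W g) | g. L2_on {0..d} g \<and> (\<forall>\<xi><t. g \<xi> = 0)}" for t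
  define T where "T = (\<lambda>i. r (h i)) ` {..<m}"
  have finT: "finite T" "card T \<le> m" unfolding T_def
    using card_image_le[of "{..<m}" "\<lambda>i. r (h i)"] by auto
  have inspan: "r (volterra_op n \<phi> W g) \<in> FV.span T" if L2g: "L2_on {0..d} g" for g
  proof -
    obtain c where c: "\<forall>x\<in>{0..d}. volterra_op n \<phi> W g x = (\<Sum>i<m. c i * h i x)"
      using hm L2g by blast
    have "r (volterra_op n \<phi> W g) = (\<Sum>i<m. (\<lambda>x. c i * r (h i) x))"
      using c by (auto simp: r_def fun_eq_iff sum_fun_app)
    also have "\<dots> \<in> FV.span T"
      by (intro FV.span_sum FV.span_scale FV.span_base) (auto simp: T_def)
    finally show ?thesis .
  qed
  have bound: "finite S \<and> card S \<le> m" if "S \<subseteq> Rim t" "FV.independent S" for S t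
  proof -
    have "S \<subseteq> FV.span T" using that(1) inspan unfolding Rim_def by blast
    then show ?thesis using FV.independent_span_bound[OF finT(1) that(2)] finT(2) by auto
  qed
  define C where "C = {card S | S t. 0 < t \<and> t \<le> d \<and> S \<subseteq> Rim t \<and> FV.independent S}"
  have "C \<subseteq> {..m}" using bound unfolding C_def by auto
  hence finC: "finite C" by (rule finite_subset) auto
  have "card ({}::(real\<Rightarrow>complex) set) \<in> C" unfolding C_def using \<open>d>0\<close> FV.independent_empty
    by (intro CollectI exI[of _ "{}::(real\<Rightarrow>complex) set"] exI[of _ d]) auto
  then have "Max C \<in> C" using finC by (intro Max_in) auto
  then obtain S0 t0 where S0: "card S0 = Max C" "0 < t0" "t0 \<le> d" "S0 \<subseteq> Rim t0" "FV.independent S0"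
    unfolding C_def mem_Collect_eq by metis
  have finS0: "finite S0" using bound S0 by blast
  have Rim_mono: "Rim t' \<subseteq> Rim t" if "t \<le> t'" for t t'
    unfolding Rim_def using that by fastforce
  have inS0: "f \<in> FV.span S0" if "0 < t" "t \<le> t0" "f \<in> Rim t" for t f
  proof (rule ccontr)
    assume nf: "f \<notin> FV.span S0"
    have "FV.independent (insert f S0)" using FV.independent_insertI[OF nf S0(5)] .
    moreover have "insert f S0 \<subseteq> Rim t" using S0(4) Rim_mono[OF that(2)] that(3) by blast
    ultimately have "card (insert f S0) \<in> C" unfolding C_def using that S0(3) by fastforce
    hence "card (insert f S0) \<le> Max C" using finC by simp
    moreover have "f \<notin> S0" using nf FV.span_base by blast
    ultimately show False using finS0 S0(1) by simp
  qed
  have van0: "f x = 0" if fR: "f \<in> Rim t0" and xr: "0 \<le> x" "x < t0" for f x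
  proof -
    obtain g where g: "f = r (volterra_op n \<phi> W g)" "\<forall>\<xi><t0. g \<xi> = 0"
      using fR unfolding Rim_def by blast
    have "integral\<^sup>L (lebesgue_on {0..x}) (\<lambda>\<xi>. W \<nu> \<xi> * g \<xi>) = 0" for \<nu>
    proof -
      have "integral\<^sup>L (lebesgue_on {0..x}) (\<lambda>\<xi>. W \<nu> \<xi> * g \<xi>) = integral\<^sup>L (lebesgue_on {0..x}) (\<lambda>\<xi>. 0::complex)"
        by (rule Bochner_Integration.integral_cong) (use g(2) xr in auto)
      then show ?thesis by simp
    qed
    then show ?thesis using g(1) by (simp add: r_def volterra_op_def)
  qed
  have van: "f x = 0" if "f \<in> FV.span S0" "0 \<le> x" "x < t0" for f x
  proof -
    have "\<forall>y\<in>{0..<t0}. f y = 0" using that(1)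
    proof (rule FV.span_induct[where P="\<lambda>f. \<forall>y\<in>{0..<t0}. f y = 0"])
      show "FV.subspace {f. \<forall>y\<in>{0..<t0}. f y = (0::complex)}"
        unfolding FV.subspace_def by auto
      show "\<And>f. f \<in> S0 \<Longrightarrow> \<forall>y\<in>{0..<t0}. f y = 0" using S0(4) van0 by auto
    qed
    then show ?thesis using that by auto
  qed
  have key: "(\<Sum>\<nu>=1..n. \<phi> \<nu> x * integral {t..s} (W \<nu>)) = 0"
    if "0 < t" "t \<le> s" "s \<le> x" "x < t0" for t s x
  proof -
    let ?g = "indicator {t..s} :: real \<Rightarrow> complex"
    have L2: "L2_on {0..d} ?g" using ind_L2 that S0(3) by auto
    have "r (volterra_op n \<phi> W ?g) \<in> Rim t" unfolding Rim_def using L2 by (auto simp: indicator_def)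
    then have "r (volterra_op n \<phi> W ?g) x = 0" using inS0[of t] van that by auto
    moreover have "integral\<^sup>L (lebesgue_on {0..x}) (\<lambda>\<xi>. W \<nu> \<xi> * ?g \<xi>) = integral {t..s} (W \<nu>)"
      if "\<nu> \<in> {1..n}" for \<nu>
      by (rule ind_integral) (use \<open>0 < t\<close> \<open>t \<le> s\<close> \<open>s \<le> x\<close> \<open>x < t0\<close> S0(3) that
            in \<open>auto intro: continuous_on_subset[OF assms(4)]\<close>)
    ultimately show ?thesis using that S0(3) by (simp add: r_def volterra_op_def)
  qed
  have eps: "\<exists>\<delta>>0. \<forall>\<nu>\<in>{1..n}. \<forall>\<xi>\<in>{0..\<delta>}. norm (W \<nu> \<xi> - W \<nu> 0) \<le> \<epsilon>" if epos: "\<epsilon> > 0" for \<epsilon>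
  proof -
    have "\<forall>\<nu>\<in>{1..n}. eventually (\<lambda>\<xi>. dist (W \<nu> \<xi>) (W \<nu> 0) < \<epsilon>) (at 0 within {0..d})"
    proof
      fix \<nu> assume "\<nu> \<in> {1..n}"
      then have "(W \<nu> \<longlongrightarrow> W \<nu> 0) (at 0 within {0..d})"
        using assms(4) \<open>d>0\<close> by (simp add: continuous_on_def)
      then show "eventually (\<lambda>\<xi>. dist (W \<nu> \<xi>) (W \<nu> 0) < \<epsilon>) (at 0 within {0..d})"
        using epos by (rule tendstoD)
    qed
    then have "eventually (\<lambda>\<xi>. \<forall>\<nu>\<in>{1..n}. dist (W \<nu> \<xi>) (W \<nu> 0) < \<epsilon>) (at 0 within {0..d})"
      by (simp add: eventually_ball_finite)
    then obtain \<delta> where \<delta>: "\<delta> > 0"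
      "\<forall>\<xi>\<in>{0..d}. \<xi> \<noteq> 0 \<and> dist \<xi> 0 < \<delta> \<longrightarrow> (\<forall>\<nu>\<in>{1..n}. dist (W \<nu> \<xi>) (W \<nu> 0) < \<epsilon>)"
      unfolding eventually_at by blast
    show ?thesis
    proof (intro exI[of _ "min (\<delta>/2) d"] conjI ballI)
      show "min (\<delta>/2) d > 0" using \<delta> \<open>d>0\<close> by simp
      fix \<nu> \<xi> assume a: "\<nu> \<in> {1..n}" "\<xi> \<in> {0..min (\<delta>/2) d}"
      then have "\<xi> < \<delta>" "\<xi> \<in> {0..d}" "\<bar>\<xi>\<bar> = \<xi>" using \<delta>(1) by auto
      then show "norm (W \<nu> \<xi> - W \<nu> 0) \<le> \<epsilon>" using \<delta>(2) a(1) epos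
        by (cases "\<xi> = 0") (auto simp: dist_norm less_imp_le)
    qed
  qed
  have zero: "(\<Sum>\<nu>=1..n. W \<nu> 0 * \<phi> \<nu> x) = 0" if "0 < x" "x < t0" for x
  proof -
    define z where "z = (\<Sum>\<nu>=1..n. W \<nu> 0 * \<phi> \<nu> x)"
    define K where "K = (\<Sum>\<nu>=1..n. norm (\<phi> \<nu> x)) + 1"
    have K: "K > 0" unfolding K_def by (simp add: sum_nonneg add_nonneg_pos)
    have zb: "norm z \<le> \<epsilon> * K" if epos: "\<epsilon> > 0" for \<epsilon>
    proof -
      obtain \<delta> where \<delta>: "\<delta>>0" "\<forall>\<nu>\<in>{1..n}. \<forall>\<xi>\<in>{0..\<delta>}. norm (W \<nu> \<xi> - W \<nu> 0) \<le> \<epsilon>"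
        using eps epos by blast
      define s where "s = min \<delta> x"
      define t where "t = s/2"
      have ts: "0 < t" "t < s" "s \<le> x" "s \<le> \<delta>" using \<delta> \<open>0 < x\<close> unfolding s_def t_def by auto
      have k: "(\<Sum>\<nu>=1..n. \<phi> \<nu> x * integral {t..s} (W \<nu>)) = 0" using key ts \<open>x<t0\<close> by auto
      have ap: "norm (integral {t..s} (W \<nu>) - of_real (s-t) * W \<nu> 0) \<le> \<epsilon> * (s-t)" if "\<nu>\<in>{1..n}" for \<nu>
      proof (rule int_approx)
        show "0 \<le> \<epsilon>" "t \<le> s" using \<open>\<epsilon>>0\<close> ts by auto
        show "continuous_on {t..s} (W \<nu>)"
          using ts \<open>x<t0\<close> S0(3) by (intro continuous_on_subset[OF assms(4)[OF that]]) auto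
        show "\<forall>\<xi>\<in>{t..s}. norm (W \<nu> \<xi> - W \<nu> 0) \<le> \<epsilon>" using \<delta>(2) that ts by auto
      qed
      have "of_real (s-t) * z = (\<Sum>\<nu>=1..n. \<phi> \<nu> x * (of_real (s-t) * W \<nu> 0 - integral {t..s} (W \<nu>)))"
      proof -
        have "(\<Sum>\<nu>=1..n. \<phi> \<nu> x * (of_real (s-t) * W \<nu> 0 - integral {t..s} (W \<nu>)))
              = (\<Sum>\<nu>=1..n. of_real (s-t) * (W \<nu> 0 * \<phi> \<nu> x)) - (\<Sum>\<nu>=1..n. \<phi> \<nu> x * integral {t..s} (W \<nu>))"
          by (simp add: right_diff_distrib sum_subtractf mult_ac)
        also have "\<dots> = of_real (s-t) * z" using k by (simp add: z_def sum_distrib_left)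
        finally show ?thesis by simp
      qed
      then have "norm (of_real (s-t) * z) \<le> (\<Sum>\<nu>=1..n. norm (\<phi> \<nu> x) * (\<epsilon>*(s-t)))"
      proof -
        assume eq: "of_real (s-t) * z = (\<Sum>\<nu>=1..n. \<phi> \<nu> x * (of_real (s-t) * W \<nu> 0 - integral {t..s} (W \<nu>)))"
        have "norm (of_real (s-t) * z) \<le> (\<Sum>\<nu>=1..n. norm (\<phi> \<nu> x * (of_real (s-t) * W \<nu> 0 - integral {t..s} (W \<nu>))))"
          unfolding eq by (rule norm_sum)
        also have "\<dots> \<le> (\<Sum>\<nu>=1..n. norm (\<phi> \<nu> x) * (\<epsilon>*(s-t)))"
        proof (rule sum_mono)
          fix \<nu> assume "\<nu> \<in> {1..n}"
          then show "norm (\<phi> \<nu> x * (of_real (s-t) * W \<nu> 0 - integral {t..s} (W \<nu>))) \<le> norm (\<phi> \<nu> x) * (\<epsilon>*(s-t))"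
            using ap[of \<nu>] by (simp add: norm_mult norm_minus_commute mult_left_mono)
        qed
        finally show ?thesis .
      qed
      also have "\<dots> = (\<epsilon>*(s-t)) * (K - 1)" by (simp add: K_def sum_distrib_left mult_ac)
      also have "\<dots> \<le> (\<epsilon>*(s-t)) * K" using epos ts by simp
      finally have A: "norm (of_real (s-t) * z) \<le> (\<epsilon>*(s-t)) * K" .
      have B: "norm (of_real (s-t) * z) = (s-t) * norm z"
        unfolding norm_mult norm_of_real using ts by simp
      have "(s-t) * norm z \<le> (s-t) * (\<epsilon> * K)" using A B by (simp add: mult_ac)
      then show ?thesis using ts by simp
    qed
    show ?thesis
    proof (rule ccontr)
      assume "(\<Sum>\<nu>=1..n. W \<nu> 0 * \<phi> \<nu> x) \<noteq> 0"
      then have nz: "norm z > 0" unfolding z_def by simp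
      have "norm z \<le> norm z / (2*K) * K" using zb[of "norm z / (2*K)"] nz K by simp
      also have "\<dots> = norm z / 2" using K by simp
      finally show False using nz by simp
    qed
  qed
  have zero2: "\<forall>x\<in>{0..t0/2}. (\<Sum>\<nu>=1..n. W \<nu> 0 * \<phi> \<nu> x) = 0"
  proof -
    let ?F = "\<lambda>x. \<Sum>\<nu>=1..n. W \<nu> 0 * \<phi> \<nu> x"
    have cont: "continuous_on {0..t0/2} ?F"
      using S0(3) S0(2) by (intro continuous_intros continuous_on_subset[OF assms(3)]) auto
    have "closed {x \<in> {0..t0/2}. ?F x = 0}"
      using continuous_closed_preimage_constant[OF cont] by simp
    moreover have "{0<..<t0/2} \<subseteq> {x \<in> {0..t0/2}. ?F x = 0}" using zero S0 by auto
    ultimately have "closure {0<..<t0/2} \<subseteq> {x \<in> {0..t0/2}. ?F x = 0}"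
      by (intro closure_minimal)
    moreover have "closure {0<..<t0/2} = {0..t0/2}" using S0(2) by simp
    ultimately show ?thesis by auto
  qed
  have "lin_indep_on {0..t0/2} n \<phi>" using assms(6) S0 by auto
  then have "W n 0 = 0" using zero2 assms(2) unfolding lin_indep_on_def
    by (metis atLeastAtMost_iff order_refl)
  with assms(5) show False by simp
qed

end
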